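(* For every integers $d \geq 2$ and $s,t \geq 1$, $$\tfrac{s}{s+t}\mathsf {Brac}_{d,s}+\tfrac{t}{s+t}\mathsf {Brac}_{d,t}\subseteq \mathsf {Brac}_{d,s+t},$$ i.e. if $(\alpha,\beta)\in\mathsf{Brac}_{d,s}$ and $(\mu,\nu)\in\mathsf{Brac}_{d,t}$ then $\big(\tfrac{s\alpha+t\mu}{s+t},\tfrac{s\beta+t\nu}{s+t}\big)\in\mathsf{Brac}_{d,s+t}$.
   Context: $\Delta_d=\{\alpha\in\mathbb R^d:\alpha_i\ge0,\ \sum_i\alpha_i=1\}$. For $s\ge1$, $\mathsf{Brac}_{d,s}$ is the set of $(\alpha,\beta)\in\Delta_d^2$ for which there exist $A_1,\dots,A_d,B_1,\dots,B_d\in M_s(\mathbb C)$ with $\sum_i A_iA_i^*=\sum_iB_iB_i^*=I_s$, $\sum_iA_iB_i^*=0$, and $\tfrac1s\|A_i\|_F^2=\alpha_i$, $\tfrac1s\|B_i\|_F^2=\beta_i$ for all $i\in[d]$, where $\|X\|_F=\operatorname{Tr}(XX^* )^{1/2}$. *)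

theory Defs
  imports Complex_Main
begin

text \<open>An s x s complex matrix is represented by a function M :: nat => nat => complex,
  of which only the entries M j k with j, k < s are relevant. Vectors in R^d are
  functions nat => real with coordinates 0..d-1 (index set [d] = {0..<d}).\<close>

definition simplex :: "nat \<Rightarrow> (nat \<Rightarrow> real) set" where
  "simplex d = {a. (\<forall>i<d. a i \<ge> 0) \<and> (\<Sum>i<d. a i) = 1 \<and> (\<forall>i\<ge>d. a i = 0)}"

definition mult_adj :: "nat \<Rightarrow> (nat \<Rightarrow> nat \<Rightarrow> complex) \<Rightarrow> (nat \<Rightarrow> nat \<Rightarrow> complex) \<Rightarrow> nat \<Rightarrow> nat \<Rightarrow> complex" where
  "mult_adj s X Y j k = (\<Sum>l<s. X j l * cnj (Y k l))"

definition frob_sq :: "nat \<Rightarrow> (nat \<Rightarrow> nat \<Rightarrow> complex) \<Rightarrow> real" where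
  "frob_sq s X = (\<Sum>j<s. \<Sum>l<s. (cmod (X j l))^2)"

definition Brac :: "nat \<Rightarrow> nat \<Rightarrow> ((nat \<Rightarrow> real) \<times> (nat \<Rightarrow> real)) set" where
  "Brac d s = {(a, b). a \<in> simplex d \<and> b \<in> simplex d \<and>
     (\<exists>A B :: nat \<Rightarrow> nat \<Rightarrow> nat \<Rightarrow> complex.
        (\<forall>j<s. \<forall>k<s. (\<Sum>i<d. mult_adj s (A i) (A i) j k) = (if j = k then 1 else 0)) \<and>
        (\<forall>j<s. \<forall>k<s. (\<Sum>i<d. mult_adj s (B i) (B i) j k) = (if j = k then 1 else 0)) \<and>
        (\<forall>j<s. \<forall>k<s. (\<Sum>i<d. mult_adj s (A i) (B i) j k) = 0) \<and>
        (\<forall>i<d. frob_sq s (A i) / real s = a i \<and> frob_sq s (B i) / real s = b i))}"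

end

theory Submission
  imports Defs
begin

lemma sum_split_add: "(\<Sum>l<s+(t::nat). f l) = (\<Sum>l<s. f l) + (\<Sum>l<t. f (s+l))"
  by (induction t) (auto simp: add.assoc)

definition blk :: "nat \<Rightarrow> (nat \<Rightarrow> nat \<Rightarrow> complex) \<Rightarrow> (nat \<Rightarrow> nat \<Rightarrow> complex) \<Rightarrow> nat \<Rightarrow> nat \<Rightarrow> complex" where
  "blk s X Y j k = (if j < s then (if k < s then X j k else 0) else (if k < s then 0 else Y (j-s) (k-s)))"

lemma ma_blk:
  "mult_adj (s+t) (blk s X Y) (blk s X' Y') j k =
    (if j < s then (if k < s then mult_adj s X X' j k else 0)
     else (if k < s then 0 else mult_adj t Y Y' (j-s) (k-s)))"
  unfolding mult_adj_def blk_def sum_split_add by auto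

lemma frob_blk: "frob_sq (s+t) (blk s X Y) = frob_sq s X + frob_sq t Y"
  unfolding frob_sq_def blk_def sum_split_add by simp

lemma sum_ma_blk:
  assumes "j < s+t" "k < s+t"
  shows "(\<Sum>i<d. mult_adj (s+t) (blk s (X i) (Y i)) (blk s (X' i) (Y' i)) j k) =
    (if j < s then (if k < s then (\<Sum>i<d. mult_adj s (X i) (X' i) j k) else 0)
     else (if k < s then 0 else (\<Sum>i<d. mult_adj t (Y i) (Y' i) (j-s) (k-s))))"
  unfolding ma_blk by auto

lemma simplex_comb:
  assumes "a \<in> simplex d" "b \<in> simplex d" "s \<ge> 1"
  shows "(\<lambda>i. (real s * a i + real t * b i) / real (s + t)) \<in> simplex d"
proof -
  have p: "real (s+t) > 0" using assms by simp
  have "(\<Sum>i<d. (real s * a i + real t * b i) / real (s + t))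
      = (real s * (\<Sum>i<d. a i) + real t * (\<Sum>i<d. b i)) / real (s+t)"
    by (simp add: sum_divide_distrib[symmetric] sum.distrib sum_distrib_left)
  also have "\<dots> = 1" using assms p unfolding simplex_def by simp
  finally show ?thesis using assms p unfolding simplex_def by auto
qed

theorem proposition3p5:
  fixes d s t :: nat and \<alpha> \<beta> \<mu> \<nu> :: "nat \<Rightarrow> real"
  assumes "d \<ge> 2" and "s \<ge> 1" and "t \<ge> 1"
    and "(\<alpha>, \<beta>) \<in> Brac d s" and "(\<mu>, \<nu>) \<in> Brac d t"
  shows "((\<lambda>i. (real s * \<alpha> i + real t * \<mu> i) / real (s + t)),
          (\<lambda>i. (real s * \<beta> i + real t * \<nu> i) / real (s + t))) \<in> Brac d (s + t)"
proof -
  from assms(4) obtain A B where sa: "\<alpha> \<in> simplex d" "\<beta> \<in> simplex d"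
    and A1: "\<forall>j<s. \<forall>k<s. (\<Sum>i<d. mult_adj s (A i) (A i) j k) = (if j = k then 1 else 0)"
    and B1: "\<forall>j<s. \<forall>k<s. (\<Sum>i<d. mult_adj s (B i) (B i) j k) = (if j = k then 1 else 0)"
    and AB1: "\<forall>j<s. \<forall>k<s. (\<Sum>i<d. mult_adj s (A i) (B i) j k) = 0"
    and F1: "\<forall>i<d. frob_sq s (A i) / real s = \<alpha> i \<and> frob_sq s (B i) / real s = \<beta> i"
    unfolding Brac_def by blast
  from assms(5) obtain C D where sb: "\<mu> \<in> simplex d" "\<nu> \<in> simplex d"
    and C1: "\<forall>j<t. \<forall>k<t. (\<Sum>i<d. mult_adj t (C i) (C i) j k) = (if j = k then 1 else 0)"
    and D1: "\<forall>j<t. \<forall>k<t. (\<Sum>i<d. mult_adj t (D i) (D i) j k) = (if j = k then 1 else 0)"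
    and CD1: "\<forall>j<t. \<forall>k<t. (\<Sum>i<d. mult_adj t (C i) (D i) j k) = 0"
    and F2: "\<forall>i<d. frob_sq t (C i) / real t = \<mu> i \<and> frob_sq t (D i) / real t = \<nu> i"
    unfolding Brac_def by blast
  define A' where "A' i = blk s (A i) (C i)" for i
  define B' where "B' i = blk s (B i) (D i)" for i
  have "\<forall>j<s+t. \<forall>k<s+t. (\<Sum>i<d. mult_adj (s+t) (A' i) (A' i) j k) = (if j = k then 1 else 0)"
  proof (intro allI impI)
    fix j k assume jk: "j < s+t" "k < s+t"
    show "(\<Sum>i<d. mult_adj (s+t) (A' i) (A' i) j k) = (if j = k then 1 else 0)"
      unfolding A'_def sum_ma_blk[OF jk] using A1 C1 jk by auto
  qed
  moreover have "\<forall>j<s+t. \<forall>k<s+t. (\<Sum>i<d. mult_adj (s+t) (B' i) (B' i) j k) = (if j = k then 1 else 0)"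
  proof (intro allI impI)
    fix j k assume jk: "j < s+t" "k < s+t"
    show "(\<Sum>i<d. mult_adj (s+t) (B' i) (B' i) j k) = (if j = k then 1 else 0)"
      unfolding B'_def sum_ma_blk[OF jk] using B1 D1 jk by auto
  qed
  moreover have "\<forall>j<s+t. \<forall>k<s+t. (\<Sum>i<d. mult_adj (s+t) (A' i) (B' i) j k) = 0"
  proof (intro allI impI)
    fix j k assume jk: "j < s+t" "k < s+t"
    show "(\<Sum>i<d. mult_adj (s+t) (A' i) (B' i) j k) = 0"
      unfolding A'_def B'_def sum_ma_blk[OF jk] using AB1 CD1 jk by auto
  qed
  moreover have "\<forall>i<d. frob_sq (s+t) (A' i) / real (s+t) = (real s * \<alpha> i + real t * \<mu> i) / real (s + t)
      \<and> frob_sq (s+t) (B' i) / real (s+t) = (real s * \<beta> i + real t * \<nu> i) / real (s + t)"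
  proof (intro allI impI)
    fix i assume i: "i < d"
    have s0: "real s \<noteq> 0" "real t \<noteq> 0" using assms by auto
    have "frob_sq s (A i) = real s * \<alpha> i" "frob_sq s (B i) = real s * \<beta> i"
      "frob_sq t (C i) = real t * \<mu> i" "frob_sq t (D i) = real t * \<nu> i"
      using F1 F2 i s0 by (auto simp: field_simps)
    then show "frob_sq (s+t) (A' i) / real (s+t) = (real s * \<alpha> i + real t * \<mu> i) / real (s + t)
      \<and> frob_sq (s+t) (B' i) / real (s+t) = (real s * \<beta> i + real t * \<nu> i) / real (s + t)"
      unfolding A'_def B'_def frob_blk by simp
  qed
  ultimately show ?thesis
    unfolding Brac_def using simplex_comb[OF sa(1) sb(1) assms(2)] simplex_comb[OF sa(2) sb(2) assms(2)]
    by blast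
qed

end
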